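(* Let $\ell\ge 0$ and let $G=(X\uplus Z,E)$ be the graph with $|Z|=2^\ell$ and $|X|=\binom{2^\ell}{2}$ in which every pair $\{z_1,z_2\}$ of distinct vertices of $Z$ is joined by an edge, and for every such pair there is a distinct vertex $x\in X$ adjacent exactly to $z_1$ and $z_2$. An arbitrary vertex of $Z$ is the root. Fix a (possibly randomized) online algorithm $A$ for the online Steiner tree problem on $G$ (terminals from $X$ arrive one by one; after each arrival $A$ adds edges, never removing any, so that all terminals so far are connected to the root). Then for every subset $S\subseteq Z$ with $|S|=2^s$, $0\le s\le\ell$, there exists a request sequence $\sigma=\sigma_S$ of terminals from $X$ such that: (i) for every $x\in\sigma$, both neighbors of $x$ in $G$ lie in $S$; (ii) there exists $z^*\in S$ with $\mathbb{E}[\deg'_{A,\sigma}(z^* )]\ge s/2$; (iii) there exists an offline solution $\mathrm{OFF}$ connecting all terminals of $\sigma$ to the root with $\max_{z\in S}\deg_{\mathrm{OFF},\sigma}(z)\le 1$ and $\deg_{\mathrm{OFF},\sigma}(z)=0$ for all $z\in(Z\setminus S)\cup\{z^*\}$.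
   Context: For $z\in Z$, a (online or offline) solution $B$ and request sequence $\sigma$, $\deg_{B,\sigma}(z)$ denotes the number of neighbors of $z$ among vertices of $X$ in the subgraph produced by $B$ on $\sigma$ (edges between vertices of $Z$ are ignored), and $\deg'_{B,\sigma}(z)$ denotes the number of those neighbors of $z$ in $X$ (in the produced subgraph) that also appear in $\sigma$. Expectations are over the randomness of $A$. *)

theory Defs
  imports "HOL-Probability.Probability"
begin

datatype vtx = Zv nat | Xv "nat set"

definition Zs :: "nat \<Rightarrow> nat set" where
  "Zs l = {0..<2^l}"

definition Xs :: "nat \<Rightarrow> vtx set" where
  "Xs l = {Xv p | p. p \<subseteq> Zs l \<and> card p = 2}"

definition edges :: "nat \<Rightarrow> vtx set set" where
  "edges l = {{Zv a, Zv b} | a b. a \<in> Zs l \<and> b \<in> Zs l \<and> a \<noteq> b}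
           \<union> {{Xv p, Zv z} | p z. Xv p \<in> Xs l \<and> z \<in> p}"

definition connected_in :: "vtx set set \<Rightarrow> vtx \<Rightarrow> vtx \<Rightarrow> bool" where
  "connected_in F u v \<longleftrightarrow> (u, v) \<in> {(a, b). {a, b} \<in> F}\<^sup>*"

definition feasible :: "nat \<Rightarrow> nat \<Rightarrow> vtx list \<Rightarrow> vtx set set \<Rightarrow> bool" where
  "feasible l r \<sigma> F \<longleftrightarrow> F \<subseteq> edges l \<and> (\<forall>x\<in>set \<sigma>. connected_in F x (Zv r))"

text \<open>A deterministic online algorithm: Alg sigma is the edge set held after serving
  the requests sigma one by one (it depends only on the requests seen so far);
  edges are never removed and every prefix is served feasibly.\<close>
definition online_alg :: "nat \<Rightarrow> nat \<Rightarrow> (vtx list \<Rightarrow> vtx set set) \<Rightarrow> bool" where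
  "online_alg l r Alg \<longleftrightarrow>
     (\<forall>\<sigma>. set \<sigma> \<subseteq> Xs l \<longrightarrow> feasible l r \<sigma> (Alg \<sigma>)) \<and>
     (\<forall>\<sigma> x. set (\<sigma> @ [x]) \<subseteq> Xs l \<longrightarrow> Alg \<sigma> \<subseteq> Alg (\<sigma> @ [x]))"

definition deg :: "nat \<Rightarrow> vtx set set \<Rightarrow> nat \<Rightarrow> nat" where
  "deg l F z = card {x \<in> Xs l. {x, Zv z} \<in> F}"

definition deg' :: "vtx list \<Rightarrow> vtx set set \<Rightarrow> nat \<Rightarrow> nat" where
  "deg' \<sigma> F z = card {x \<in> set \<sigma>. {x, Zv z} \<in> F}"

end

theory Submission
  imports Defs
begin

lemma edge_from_X:
  assumes "F \<subseteq> edges l" "connected_in F (Xv p) (Zv r)"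
  shows "\<exists>z\<in>p. {Xv p, Zv z} \<in> F"
proof -
  have "(Xv p, Zv r) \<in> {(a, b). {a, b} \<in> F}\<^sup>*" using assms(2) by (simp add: connected_in_def)
  then obtain b where b: "{Xv p, b} \<in> F"
    by (cases rule: converse_rtranclE) auto
  then have "{Xv p, b} \<in> edges l" using assms(1) by blast
  then show ?thesis using b unfolding edges_def
    by (auto simp: doubleton_eq_iff)
qed

lemma inj_comb:
  assumes i1: "inj_on f1 A" and i2: "inj_on f2 B" and im1: "f1 ` A \<subseteq> S1 - {z1}"
    and im2: "f2 ` B \<subseteq> S2 - {z2}" and d: "S1 \<inter> S2 = {}" and z: "z2 \<in> S2"
    and xa: "x \<notin> A" and xb: "x \<notin> B" and ab: "A \<inter> B = {}"
  shows "inj_on (\<lambda>v. if v \<in> A then f1 v else if v \<in> B then f2 v else z2) (A \<union> B \<union> {x})"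
proof (rule inj_onI)
  fix a b
  assume a: "a \<in> A \<union> B \<union> {x}" and b: "b \<in> A \<union> B \<union> {x}"
    and e: "(if a \<in> A then f1 a else if a \<in> B then f2 a else z2) = (if b \<in> A then f1 b else if b \<in> B then f2 b else z2)"
  have A1: "v \<in> A \<Longrightarrow> f1 v \<in> S1 \<and> f1 v \<noteq> z1" for v using im1 by auto
  have B1: "v \<in> B \<Longrightarrow> f2 v \<in> S2 \<and> f2 v \<noteq> z2" for v using im2 by auto
  have nS: "v \<in> S1 \<Longrightarrow> v \<notin> S2" for v using d by auto
  show "a = b"
  proof (cases "a \<in> A")
    case aA: True
    show ?thesis
    proof (cases "b \<in> A")
      case True then show ?thesis using aA e i1 by (simp add: inj_on_def)
    next
      case False
      then have "f1 a = (if b \<in> B then f2 b else z2)" using aA e by simp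
      then show ?thesis using A1[OF aA] B1 nS z by (auto split: if_splits)
    qed
  next
    case naA: False
    show ?thesis
    proof (cases "a \<in> B")
      case aB: True
      show ?thesis
      proof (cases "b \<in> A")
        case True
        then have "f1 b = f2 a" using aB naA e by simp
        then show ?thesis using A1[OF True] B1[OF aB] nS by auto
      next
        case nbA: False
        show ?thesis
        proof (cases "b \<in> B")
          case True then show ?thesis using aB naA nbA e i2 by (simp add: inj_on_def)
        next
          case False then show ?thesis using aB naA nbA e B1[OF aB] by simp
        qed
      qed
    next
      case naB: False
      then have ax: "a = x" using a naA by auto
      show ?thesis
      proof (cases "b \<in> A")
        case True then show ?thesis using naA naB e A1[OF True] nS z by auto
      next
        case nbA: False
        show ?thesis
        proof (cases "b \<in> B")
          case True then show ?thesis using naA naB nbA e B1[OF True] by simp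
        next
          case False then show ?thesis using ax b nbA by auto
        qed
      qed
    qed
  qed
qed

locale setting = prob_space M for M :: "'w measure" +
  fixes l r :: nat and A :: "'w \<Rightarrow> vtx list \<Rightarrow> vtx set set"
  assumes r: "r \<in> Zs l"
    and alg: "\<forall>\<omega>\<in>space M. online_alg l r (A \<omega>)"
    and meas: "\<forall>\<sigma>. (\<lambda>\<omega>. A \<omega> \<sigma>) \<in> measurable M (count_space UNIV)"
begin

lemma mono_A:
  assumes "\<omega> \<in> space M" "set (\<tau> @ \<rho>) \<subseteq> Xs l"
  shows "A \<omega> \<tau> \<subseteq> A \<omega> (\<tau> @ \<rho>)"
  using assms(2)
proof (induction \<rho> rule: rev_induct)
  case Nil then show ?case by simp
next
  case (snoc x xs)
  have oa: "\<forall>\<sigma> x. set (\<sigma> @ [x]) \<subseteq> Xs l \<longrightarrow> A \<omega> \<sigma> \<subseteq> A \<omega> (\<sigma> @ [x])"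
    using alg assms(1) unfolding online_alg_def by blast
  have "A \<omega> (\<tau> @ xs) \<subseteq> A \<omega> ((\<tau> @ xs) @ [x])"
    using oa[rule_format, of "\<tau> @ xs" x] snoc.prems by simp
  moreover have "A \<omega> \<tau> \<subseteq> A \<omega> (\<tau> @ xs)" using snoc by auto
  ultimately show ?case by auto
qed

lemma integ:
  "integrable M (\<lambda>\<omega>. real (card {y \<in> set \<sigma>. P y (A \<omega> \<sigma>')}))"
proof (rule integrable_const_bound[where B="real (length \<sigma>)"])
  show "AE x in M. norm (real (card {y \<in> set \<sigma>. P y (A x \<sigma>')})) \<le> real (length \<sigma>)"
  proof (rule AE_I2)
    fix x
    have "card {y \<in> set \<sigma>. P y (A x \<sigma>')} \<le> card (set \<sigma>)" by (rule card_mono) auto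
    also have "\<dots> \<le> length \<sigma>" by (rule card_length)
    finally show "norm (real (card {y \<in> set \<sigma>. P y (A x \<sigma>')})) \<le> real (length \<sigma>)" by simp
  qed
  have "(\<lambda>F. real (card {y \<in> set \<sigma>. P y F})) \<in> measurable (count_space UNIV) borel"
    by (simp add: measurable_count_space_eq1)
  from measurable_compose[OF meas[rule_format] this]
  show "(\<lambda>\<omega>. real (card {y \<in> set \<sigma>. P y (A \<omega> \<sigma>')})) \<in> borel_measurable M" by simp
qed

lemma main:
  "S \<subseteq> Zs l \<Longrightarrow> card S = 2 ^ s \<Longrightarrow> set \<tau> \<subseteq> Xs l \<Longrightarrow>
   \<exists>\<sigma> zs f. set \<sigma> \<subseteq> Xs l \<and> (\<forall>p. Xv p \<in> set \<sigma> \<longrightarrow> p \<subseteq> S) \<and> zs \<in> S \<and>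
     (\<forall>p. Xv p \<in> set \<sigma> \<longrightarrow> f (Xv p) \<in> p) \<and> inj_on f (set \<sigma>) \<and> f ` set \<sigma> \<subseteq> S - {zs} \<and>
     (\<integral>\<omega>. real (card {y \<in> set \<sigma>. {y, Zv zs} \<in> A \<omega> (\<tau> @ \<sigma>)}) \<partial>M) \<ge> real s / 2"
proof (induction s arbitrary: S \<tau>)
  case 0
  then obtain z where "S = {z}" by (auto simp: card_Suc_eq)
  then show ?case by (intro exI[of _ "[]"] exI[of _ z]) auto
next
  case (Suc s)
  have finS: "finite S" using Suc.prems(2) card_ge_0_finite by force
  obtain S1 where S1: "S1 \<subseteq> S" "card S1 = 2 ^ s" "finite S1"
    using obtain_subset_with_card_n[of "2^s" S] Suc.prems(2) by auto
  define S2 where "S2 = S - S1"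
  have cS2: "card S2 = 2 ^ s" unfolding S2_def using S1 Suc.prems(2) by (simp add: card_Diff_subset)
  have S1Z: "S1 \<subseteq> Zs l" and S2Z: "S2 \<subseteq> Zs l" using S1 Suc.prems(1) unfolding S2_def by auto
  obtain \<sigma>1 z1 f1 where H1: "set \<sigma>1 \<subseteq> Xs l" "\<forall>p. Xv p \<in> set \<sigma>1 \<longrightarrow> p \<subseteq> S1" "z1 \<in> S1"
     "\<forall>p. Xv p \<in> set \<sigma>1 \<longrightarrow> f1 (Xv p) \<in> p" "inj_on f1 (set \<sigma>1)" "f1 ` set \<sigma>1 \<subseteq> S1 - {z1}"
     "(\<integral>\<omega>. real (card {y \<in> set \<sigma>1. {y, Zv z1} \<in> A \<omega> (\<tau> @ \<sigma>1)}) \<partial>M) \<ge> real s / 2"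
    using Suc.IH[OF S1Z S1(2) Suc.prems(3)] by blast
  have t1: "set (\<tau> @ \<sigma>1) \<subseteq> Xs l" using H1(1) Suc.prems(3) by auto
  obtain \<sigma>2 z2 f2 where H2: "set \<sigma>2 \<subseteq> Xs l" "\<forall>p. Xv p \<in> set \<sigma>2 \<longrightarrow> p \<subseteq> S2" "z2 \<in> S2"
     "\<forall>p. Xv p \<in> set \<sigma>2 \<longrightarrow> f2 (Xv p) \<in> p" "inj_on f2 (set \<sigma>2)" "f2 ` set \<sigma>2 \<subseteq> S2 - {z2}"
     "(\<integral>\<omega>. real (card {y \<in> set \<sigma>2. {y, Zv z2} \<in> A \<omega> ((\<tau> @ \<sigma>1) @ \<sigma>2)}) \<partial>M) \<ge> real s / 2"
    using Suc.IH[OF S2Z cS2 t1] by blast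
  have z12: "z1 \<noteq> z2" using H1(3) H2(3) unfolding S2_def by auto
  define x where "x = Xv {z1, z2}"
  define \<rho> where "\<rho> = \<sigma>1 @ \<sigma>2 @ [x]"
  have xX: "x \<in> Xs l" unfolding x_def Xs_def using H1(3) H2(3) S1Z S2Z z12 by auto
  have \<rho>X: "set (\<tau> @ \<rho>) \<subseteq> Xs l" unfolding \<rho>_def using t1 H2(1) xX by auto
  have \<rho>S: "\<forall>p. Xv p \<in> set \<rho> \<longrightarrow> p \<subseteq> S"
    using H1(2) H2(2) H1(3) H2(3) S1(1) unfolding \<rho>_def x_def S2_def by auto
  have xn1: "x \<notin> set \<sigma>1" using H1(2) H2(3) unfolding x_def S2_def by auto
  have xn2: "x \<notin> set \<sigma>2" using H2(2) H1(3) unfolding x_def S2_def by auto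
  have dis12: "set \<sigma>1 \<inter> set \<sigma>2 = {}"
  proof (rule ccontr)
    assume "set \<sigma>1 \<inter> set \<sigma>2 \<noteq> {}"
    then obtain y where y: "y \<in> set \<sigma>1" "y \<in> set \<sigma>2" by auto
    then obtain p where "y = Xv p" "card p = 2" using H1(1) unfolding Xs_def by auto
    moreover then have "p \<subseteq> S1" "p \<subseteq> S2" using H1(2) H2(2) y by auto
    ultimately show False unfolding S2_def by (metis Diff_disjoint card.empty inf.bounded_iff subset_empty zero_neq_numeral)
  qed
  define g1 where "g1 = (\<lambda>\<omega>. real (card {y \<in> set \<sigma>1. {y, Zv z1} \<in> A \<omega> (\<tau> @ \<sigma>1)}))"
  define g2 where "g2 = (\<lambda>\<omega>. real (card {y \<in> set \<sigma>2. {y, Zv z2} \<in> A \<omega> ((\<tau> @ \<sigma>1) @ \<sigma>2)}))"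
  define h1 where "h1 = (\<lambda>\<omega>. real (card {y \<in> set \<rho>. {y, Zv z1} \<in> A \<omega> (\<tau> @ \<rho>)}))"
  define h2 where "h2 = (\<lambda>\<omega>. real (card {y \<in> set \<rho>. {y, Zv z2} \<in> A \<omega> (\<tau> @ \<rho>)}))"
  have pw: "g1 \<omega> + g2 \<omega> + 1 \<le> h1 \<omega> + h2 \<omega>" if \<omega>: "\<omega> \<in> space M" for \<omega>
  proof -
    let ?F = "A \<omega> (\<tau> @ \<rho>)"
    have m1: "A \<omega> (\<tau> @ \<sigma>1) \<subseteq> ?F" using mono_A[OF \<omega>, of "\<tau> @ \<sigma>1" "\<sigma>2 @ [x]"] \<rho>X
      unfolding \<rho>_def by auto
    have m2: "A \<omega> ((\<tau> @ \<sigma>1) @ \<sigma>2) \<subseteq> ?F" using mono_A[OF \<omega>, of "(\<tau> @ \<sigma>1) @ \<sigma>2" "[x]"] \<rho>X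
      unfolding \<rho>_def by auto
    have feas: "feasible l r (\<tau> @ \<rho>) ?F" using alg \<omega> \<rho>X unfolding online_alg_def by auto
    have "\<exists>z\<in>{z1, z2}. {x, Zv z} \<in> ?F"
      unfolding x_def
      by (rule edge_from_X[of _ l _ r]) (use feas in \<open>auto simp: feasible_def \<rho>_def x_def\<close>)
    then have one: "(if {x, Zv z1} \<in> ?F then 1 else 0) + (if {x, Zv z2} \<in> ?F then 1 else 0) \<ge> (1::nat)"
      by auto
    have c1: "card {y \<in> set \<sigma>1. {y, Zv z1} \<in> A \<omega> (\<tau> @ \<sigma>1)} + (if {x, Zv z1} \<in> ?F then 1 else 0)
       \<le> card {y \<in> set \<rho>. {y, Zv z1} \<in> ?F}"
    proof -
      let ?B = "{y \<in> set \<sigma>1. {y, Zv z1} \<in> A \<omega> (\<tau> @ \<sigma>1)}"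
      let ?C = "(if {x, Zv z1} \<in> ?F then insert x ?B else ?B)"
      have "?C \<subseteq> {y \<in> set \<rho>. {y, Zv z1} \<in> ?F}" using m1 unfolding \<rho>_def by auto
      then have "card ?C \<le> card {y \<in> set \<rho>. {y, Zv z1} \<in> ?F}" by (rule card_mono[rotated]) simp
      moreover have "card ?C = card ?B + (if {x, Zv z1} \<in> ?F then 1 else 0)" using xn1 by auto
      ultimately show ?thesis by simp
    qed
    have c2: "card {y \<in> set \<sigma>2. {y, Zv z2} \<in> A \<omega> ((\<tau> @ \<sigma>1) @ \<sigma>2)} + (if {x, Zv z2} \<in> ?F then 1 else 0)
       \<le> card {y \<in> set \<rho>. {y, Zv z2} \<in> ?F}"
    proof -
      let ?B = "{y \<in> set \<sigma>2. {y, Zv z2} \<in> A \<omega> ((\<tau> @ \<sigma>1) @ \<sigma>2)}"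
      let ?C = "(if {x, Zv z2} \<in> ?F then insert x ?B else ?B)"
      have "?C \<subseteq> {y \<in> set \<rho>. {y, Zv z2} \<in> ?F}" using m2 unfolding \<rho>_def by auto
      then have "card ?C \<le> card {y \<in> set \<rho>. {y, Zv z2} \<in> ?F}" by (rule card_mono[rotated]) simp
      moreover have "card ?C = card ?B + (if {x, Zv z2} \<in> ?F then 1 else 0)" using xn2 by auto
      ultimately show ?thesis by simp
    qed
    have "card {y \<in> set \<sigma>1. {y, Zv z1} \<in> A \<omega> (\<tau> @ \<sigma>1)} + card {y \<in> set \<sigma>2. {y, Zv z2} \<in> A \<omega> ((\<tau> @ \<sigma>1) @ \<sigma>2)} + 1
      \<le> card {y \<in> set \<rho>. {y, Zv z1} \<in> ?F} + card {y \<in> set \<rho>. {y, Zv z2} \<in> ?F}"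
      using c1 c2 one by linarith
    then show ?thesis unfolding g1_def g2_def h1_def h2_def by linarith
  qed
  have ig1: "integrable M g1" and ig2: "integrable M g2" and ih1: "integrable M h1" and ih2: "integrable M h2"
    unfolding g1_def g2_def h1_def h2_def by (rule integ)+
  have "(\<integral>\<omega>. g1 \<omega> + g2 \<omega> + 1 \<partial>M) \<le> (\<integral>\<omega>. h1 \<omega> + h2 \<omega> \<partial>M)"
    using pw by (intro integral_mono) (auto intro!: Bochner_Integration.integrable_add ig1 ig2 ih1 ih2)
  moreover have "(\<integral>\<omega>. g1 \<omega> + g2 \<omega> + 1 \<partial>M) = integral\<^sup>L M g1 + integral\<^sup>L M g2 + 1"
    using ig1 ig2 by (simp add: Bochner_Integration.integral_add prob_space)
  moreover have "(\<integral>\<omega>. h1 \<omega> + h2 \<omega> \<partial>M) = integral\<^sup>L M h1 + integral\<^sup>L M h2"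
    using ih1 ih2 by (simp add: Bochner_Integration.integral_add)
  ultimately have sum: "integral\<^sup>L M h1 + integral\<^sup>L M h2 \<ge> real (Suc s)"
    using H1(7) H2(7) unfolding g1_def g2_def by simp
  have setr: "set \<rho> = set \<sigma>1 \<union> set \<sigma>2 \<union> {x}" unfolding \<rho>_def by auto
  show ?case
  proof (cases "integral\<^sup>L M h1 \<ge> real (Suc s) / 2")
    case True
    define f where "f = (\<lambda>v. if v \<in> set \<sigma>1 then f1 v else if v \<in> set \<sigma>2 then f2 v else z2)"
    have "inj_on f (set \<rho>)" unfolding setr f_def
      by (rule inj_comb[OF H1(5) H2(5) H1(6) H2(6) _ _ xn1 xn2 dis12]) (use H2(3) in \<open>auto simp: S2_def\<close>)
    moreover have "f ` set \<rho> \<subseteq> S - {z1}" unfolding setr f_def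
      using H1(6) H2(6) H1(3) H2(3) S1(1) z12 unfolding S2_def by auto
    moreover have "\<forall>p. Xv p \<in> set \<rho> \<longrightarrow> f (Xv p) \<in> p" unfolding setr f_def x_def
      using H1(4) H2(4) by auto
    moreover have "z1 \<in> S" using H1(3) S1(1) by auto
    ultimately show ?thesis using True \<rho>X \<rho>S
      by (intro exI[of _ \<rho>] exI[of _ z1] exI[of _ f]) (simp add: h1_def)
  next
    case False
    then have True: "integral\<^sup>L M h2 \<ge> real (Suc s) / 2" using sum by simp
    define f where "f = (\<lambda>v. if v \<in> set \<sigma>2 then f2 v else if v \<in> set \<sigma>1 then f1 v else z1)"
    have setr2: "set \<rho> = set \<sigma>2 \<union> set \<sigma>1 \<union> {x}" unfolding setr by auto
    have "inj_on f (set \<rho>)" unfolding setr2 f_def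
      by (rule inj_comb[OF H2(5) H1(5) H2(6) H1(6) _ _ xn2 xn1]) (use H1(3) dis12 in \<open>auto simp: S2_def\<close>)
    moreover have "f ` set \<rho> \<subseteq> S - {z2}" unfolding setr f_def
      using H1(6) H2(6) H1(3) H2(3) S1(1) z12 unfolding S2_def by auto
    moreover have "\<forall>p. Xv p \<in> set \<rho> \<longrightarrow> f (Xv p) \<in> p" unfolding setr f_def x_def
      using H1(4) H2(4) by auto
    moreover have "z2 \<in> S" using H2(3) unfolding S2_def by auto
    ultimately show ?thesis using True \<rho>X \<rho>S
      by (intro exI[of _ \<rho>] exI[of _ z2] exI[of _ f]) (simp add: h2_def)
  qed
qed

end

theorem lemma4:
  fixes l r :: nat and M :: "'w measure" and A :: "'w \<Rightarrow> vtx list \<Rightarrow> vtx set set"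
  assumes "r \<in> Zs l"
    and "prob_space M"
    and "\<forall>\<omega>\<in>space M. online_alg l r (A \<omega>)"
    and "\<forall>\<sigma>. (\<lambda>\<omega>. A \<omega> \<sigma>) \<in> measurable M (count_space UNIV)"
  shows "\<forall>S s. S \<subseteq> Zs l \<and> card S = 2 ^ s \<and> s \<le> l \<longrightarrow>
    (\<exists>\<sigma>. set \<sigma> \<subseteq> Xs l \<and>
        (\<forall>p. Xv p \<in> set \<sigma> \<longrightarrow> p \<subseteq> S) \<and>
        (\<exists>zs\<in>S. (\<integral>\<omega>. real (deg' \<sigma> (A \<omega> \<sigma>) zs) \<partial>M) \<ge> real s / 2 \<and>
           (\<exists>OFF. feasible l r \<sigma> OFF \<and> (\<forall>z\<in>S. deg l OFF z \<le> 1) \<and>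
                  (\<forall>z\<in>(Zs l - S) \<union> {zs}. deg l OFF z = 0))))"
proof (intro allI impI)
  fix S s assume H: "S \<subseteq> Zs l \<and> card S = 2 ^ s \<and> s \<le> l"
  interpret setting M l r A
    by (rule setting.intro) (use assms in \<open>auto simp: setting_axioms_def\<close>)
  obtain \<sigma> zs f where P: "set \<sigma> \<subseteq> Xs l" "\<forall>p. Xv p \<in> set \<sigma> \<longrightarrow> p \<subseteq> S" "zs \<in> S"
     "\<forall>p. Xv p \<in> set \<sigma> \<longrightarrow> f (Xv p) \<in> p" "inj_on f (set \<sigma>)" "f ` set \<sigma> \<subseteq> S - {zs}"
     "(\<integral>\<omega>. real (card {y \<in> set \<sigma>. {y, Zv zs} \<in> A \<omega> ([] @ \<sigma>)}) \<partial>M) \<ge> real s / 2"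
    using main[of S s "[]"] H by auto
  define OFF where "OFF = (\<lambda>x. {x, Zv (f x)}) ` set \<sigma> \<union> {{Zv a, Zv r} | a. a \<in> Zs l \<and> a \<noteq> r}"
  have degeq: "{x \<in> Xs l. {x, Zv z} \<in> OFF} = {x \<in> set \<sigma>. f x = z}" for z
  proof -
    have "{x \<in> Xs l. {x, Zv z} \<in> OFF} \<subseteq> {x \<in> set \<sigma>. f x = z}"
    proof
      fix x assume x: "x \<in> {x \<in> Xs l. {x, Zv z} \<in> OFF}"
      then obtain p where p: "x = Xv p" unfolding Xs_def by auto
      from x have m: "{Xv p, Zv z} \<in> OFF" using p by simp
      have "{Xv p, Zv z} \<notin> {{Zv a, Zv r} | a. a \<in> Zs l \<and> a \<noteq> r}"
        by (auto simp: doubleton_eq_iff)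
      then obtain y where y: "y \<in> set \<sigma>" "{Xv p, Zv z} = {y, Zv (f y)}"
        using m unfolding OFF_def by blast
      then have "y = Xv p" "z = f y" by (auto simp: doubleton_eq_iff)
      then show "x \<in> {x \<in> set \<sigma>. f x = z}" using y p by simp
    qed
    moreover have "{x \<in> set \<sigma>. f x = z} \<subseteq> {x \<in> Xs l. {x, Zv z} \<in> OFF}"
    proof
      fix x assume "x \<in> {x \<in> set \<sigma>. f x = z}"
      then have "x \<in> Xs l" "{x, Zv (f x)} \<in> OFF" "f x = z" using P(1) unfolding OFF_def by auto
      then show "x \<in> {x \<in> Xs l. {x, Zv z} \<in> OFF}" by simp
    qed
    ultimately show ?thesis by blast
  qed
  have le1: "card {x \<in> set \<sigma>. f x = z} \<le> 1" for z
  proof (cases "{x \<in> set \<sigma>. f x = z} = {}")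
    case False
    then obtain y where y: "y \<in> set \<sigma>" "f y = z" by auto
    then have "{x \<in> set \<sigma>. f x = z} = {y}" using P(5) unfolding inj_on_def by auto
    then show ?thesis by simp
  next
    case True
    show ?thesis unfolding True by simp
  qed
  have zero: "card {x \<in> set \<sigma>. f x = z} = 0" if "z \<notin> S - {zs}" for z
    using that P(6) by (auto simp: card_eq_0_iff)
  have feas: "feasible l r \<sigma> OFF"
    unfolding feasible_def
  proof
    show "OFF \<subseteq> edges l"
    proof
      fix e assume "e \<in> OFF"
      then consider (a) y where "y \<in> set \<sigma>" "e = {y, Zv (f y)}"
        | (b) a where "a \<in> Zs l" "a \<noteq> r" "e = {Zv a, Zv r}" unfolding OFF_def by auto
      then show "e \<in> edges l"
      proof cases
        case a
        then obtain p where p: "y = Xv p" "Xv p \<in> Xs l" using P(1) unfolding Xs_def by auto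
        then have "f y \<in> p" using P(4) a by auto
        then show ?thesis unfolding edges_def using a p by blast
      next
        case b then show ?thesis unfolding edges_def using assms(1) by blast
      qed
    qed
    show "\<forall>x\<in>set \<sigma>. connected_in OFF x (Zv r)"
    proof
      fix x assume x: "x \<in> set \<sigma>"
      let ?R = "{(a, b). {a, b} \<in> OFF}"
      have 1: "(x, Zv (f x)) \<in> ?R" using x unfolding OFF_def by auto
      have 2: "(Zv (f x), Zv r) \<in> ?R\<^sup>*"
      proof (cases "f x = r")
        case False
        have "f x \<in> Zs l" using P(6) H x by auto
        then have "(Zv (f x), Zv r) \<in> ?R" using False unfolding OFF_def by auto
        then show ?thesis by auto
      qed simp
      show "connected_in OFF x (Zv r)" unfolding connected_in_def using converse_rtrancl_into_rtrancl[OF 1 2] by simp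
    qed
  qed
  have E: "(\<integral>\<omega>. real (deg' \<sigma> (A \<omega> \<sigma>) zs) \<partial>M) \<ge> real s / 2"
    using P(7) by (simp add: deg'_def)
  have dS: "\<forall>z\<in>S. deg l OFF z \<le> 1" using le1 by (simp add: deg_def degeq)
  have d0: "\<forall>z\<in>(Zs l - S) \<union> {zs}. deg l OFF z = 0"
  proof
    fix z assume "z \<in> (Zs l - S) \<union> {zs}"
    then have "z \<notin> S - {zs}" by auto
    then show "deg l OFF z = 0" using zero by (simp add: deg_def degeq)
  qed
  show "\<exists>\<sigma>. set \<sigma> \<subseteq> Xs l \<and>
        (\<forall>p. Xv p \<in> set \<sigma> \<longrightarrow> p \<subseteq> S) \<and>
        (\<exists>zs\<in>S. (\<integral>\<omega>. real (deg' \<sigma> (A \<omega> \<sigma>) zs) \<partial>M) \<ge> real s / 2 \<and>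
           (\<exists>OFF. feasible l r \<sigma> OFF \<and> (\<forall>z\<in>S. deg l OFF z \<le> 1) \<and>
                  (\<forall>z\<in>(Zs l - S) \<union> {zs}. deg l OFF z = 0)))"
    using P(1,2,3) E feas dS d0 by blast
qed

end
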